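(* Let $T$ be a forest and $F$ a graph (both without roots), and let $\phi:V(T)\to V(F)$ be a local isomorphism. Then there exists a set $V\subseteq V(T)$ such that $\phi$ restricted to $V$ is a bijection onto $V(F)$ and the map $\phi^*$ restricted to $E_V(T)$ is injective.
   Context: A map $\phi:V(T)\to V(F)$ is a local isomorphism if it is surjective, maps every edge of $T$ to an edge of $F$ (i.e. $uv\in E(T)$ implies $\phi(u)\phi(v)\in E(F)$), and maps any two distinct edges of $T$ sharing a vertex to distinct edges of $F$. The induced map $\phi^*:E(T)\to E(F)$ sends $uv$ to $\phi(u)\phi(v)$. For $S\subseteq V(T)$, $E_S(T)$ is the set of edges of $T$ containing at least one vertex of $S$. *)

theory Defs
  imports Main
begin

definition simple_graph :: "'a set \<Rightarrow> 'a set set \<Rightarrow> bool" where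
  "simple_graph V E \<longleftrightarrow> finite V \<and>
     (\<forall>e\<in>E. \<exists>u v. e = {u, v} \<and> u \<noteq> v \<and> u \<in> V \<and> v \<in> V)"

definition forest :: "'a set \<Rightarrow> 'a set set \<Rightarrow> bool" where
  "forest V E \<longleftrightarrow> simple_graph V E \<and>
     \<not> (\<exists>cs. length cs \<ge> 3 \<and> distinct cs \<and> set cs \<subseteq> V \<and>
            (\<forall>i<length cs. {cs ! i, cs ! ((i + 1) mod length cs)} \<in> E))"

definition edge_map :: "('a \<Rightarrow> 'b) \<Rightarrow> 'a set \<Rightarrow> 'b set" where
  "edge_map \<phi> e = \<phi> ` e"

definition local_iso ::
  "('a \<Rightarrow> 'b) \<Rightarrow> 'a set \<Rightarrow> 'a set set \<Rightarrow> 'b set \<Rightarrow> 'b set set \<Rightarrow> bool" where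
  "local_iso \<phi> VT ET VF EF \<longleftrightarrow>
     \<phi> ` VT = VF \<and>
     (\<forall>u v. {u, v} \<in> ET \<longrightarrow> {\<phi> u, \<phi> v} \<in> EF) \<and>
     (\<forall>e1\<in>ET. \<forall>e2\<in>ET. e1 \<noteq> e2 \<and> e1 \<inter> e2 \<noteq> {} \<longrightarrow> edge_map \<phi> e1 \<noteq> edge_map \<phi> e2)"

definition edges_at :: "'a set set \<Rightarrow> 'a set \<Rightarrow> 'a set set" where
  "edges_at ET S = {e \<in> ET. e \<inter> S \<noteq> {}}"

end

theory Submission imports Defs begin

lemma forest_leaf:
  assumes F: "forest VT ET" and ne: "VT \<noteq> {}"
  shows "\<exists>l\<in>VT. \<forall>y z. {l,y}\<in>ET \<longrightarrow> {l,z}\<in>ET \<longrightarrow> y=z"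
proof (rule ccontr)
  assume H: "\<not> ?thesis"
  have fin: "finite VT" and sg: "\<forall>e\<in>ET. \<exists>u v. e = {u, v} \<and> u \<noteq> v \<and> u \<in> VT \<and> v \<in> VT"
    using F unfolding forest_def simple_graph_def by auto
  have nocyc: "\<not> (\<exists>cs. length cs \<ge> 3 \<and> distinct cs \<and> set cs \<subseteq> VT \<and>
            (\<forall>i<length cs. {cs ! i, cs ! ((i + 1) mod length cs)} \<in> ET))"
    using F unfolding forest_def by auto
  define P where "P ps \<longleftrightarrow> ps \<noteq> [] \<and> distinct ps \<and> set ps \<subseteq> VT \<and>
      (\<forall>i. Suc i < length ps \<longrightarrow> {ps!i, ps!Suc i} \<in> ET)" for ps
  obtain v where v: "v \<in> VT" using ne by auto
  have P1: "P [v]" using v unfolding P_def by auto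
  have bnd: "\<forall>ps. P ps \<longrightarrow> length ps < Suc (card VT)"
  proof (intro allI impI)
    fix ps assume "P ps"
    then have "distinct ps" "set ps \<subseteq> VT" unfolding P_def by auto
    then have "length ps \<le> card VT" using fin distinct_card card_mono by metis
    then show "length ps < Suc (card VT)" by simp
  qed
  obtain ps where Pps: "P ps" and mx: "\<forall>qs. P qs \<longrightarrow> length qs \<le> length ps"
    using ex_has_greatest_nat[of P "[v]" length, OF P1 bnd] by blast
  have psne: "ps \<noteq> []" and dps: "distinct ps" and sps: "set ps \<subseteq> VT"
    and eps: "\<And>i. Suc i < length ps \<Longrightarrow> {ps!i, ps!Suc i} \<in> ET"
    using Pps unfolding P_def by auto
  define x where "x = ps ! 0"
  have xin: "x \<in> VT" using psne sps x_def by (metis nth_mem length_greater_0_conv subsetD)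
  obtain y z where y: "{x,y}\<in>ET" and z: "{x,z}\<in>ET" and yz: "y \<noteq> z" using H xin by blast
  have nb: "\<exists>j. 0 < j \<and> j < length ps \<and> n = ps ! j" if n: "{x,n}\<in>ET" for n
  proof -
    obtain u w where uw: "{x,n} = {u,w}" "u \<noteq> w" "u \<in> VT" "w \<in> VT" using sg n by blast
    have nx: "n \<noteq> x" and nV: "n \<in> VT" using uw by (auto simp: doubleton_eq_iff)
    have "n \<in> set ps"
    proof (rule ccontr)
      assume nn: "n \<notin> set ps"
      have "P (n # ps)" unfolding P_def
      proof (intro conjI allI impI)
        fix i assume i: "Suc i < length (n # ps)"
        show "{(n # ps) ! i, (n # ps) ! Suc i} \<in> ET"
        proof (cases i)
          case 0 then show ?thesis using n x_def by (simp add: insert_commute)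
        next
          case (Suc k) then show ?thesis using i eps by simp
        qed
      qed (use nn dps sps nV in auto)
      then show False using mx by fastforce
    qed
    then obtain j where j: "j < length ps" "n = ps ! j" by (metis in_set_conv_nth)
    have "j \<noteq> 0" using j nx x_def by (cases j) auto
    then show ?thesis using j by auto
  qed
  obtain jy where jy: "0 < jy" "jy < length ps" "y = ps ! jy" using nb y by blast
  obtain jz where jz: "0 < jz" "jz < length ps" "z = ps ! jz" using nb z by blast
  obtain j where j: "2 \<le> j" "j < length ps" "{x, ps ! j} \<in> ET"
  proof (cases "jy \<ge> 2")
    case True then show ?thesis using that jy y by blast
  next
    case False
    then have "jy = 1" using jy by auto
    then have "jz \<noteq> 1" using jz jy yz by auto
    then have "2 \<le> jz" using jz(1) by linarith
    then show ?thesis using that jz z by blast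
  qed
  define cs where "cs = take (Suc j) ps"
  have lcs: "length cs = Suc j" using j cs_def by simp
  have "length cs \<ge> 3 \<and> distinct cs \<and> set cs \<subseteq> VT \<and>
            (\<forall>i<length cs. {cs ! i, cs ! ((i + 1) mod length cs)} \<in> ET)"
  proof (intro conjI allI impI)
    show "length cs \<ge> 3" using lcs j by simp
    show "distinct cs" using dps cs_def by simp
    show "set cs \<subseteq> VT" using sps cs_def set_take_subset by fastforce
    fix i assume i: "i < length cs"
    show "{cs ! i, cs ! ((i + 1) mod length cs)} \<in> ET"
    proof (cases "i < j")
      case True
      then have "(i+1) mod length cs = Suc i" using lcs by simp
      then show ?thesis using True cs_def eps j by simp
    next
      case False
      then have "i = j" using i lcs by simp
      then show ?thesis using lcs cs_def j x_def by (simp add: insert_commute)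
    qed
  qed
  then show False using nocyc by blast
qed

lemma forest_del:
  assumes "forest VT ET"
  shows "forest (VT - {l}) {e\<in>ET. l \<notin> e}"
proof -
  have sg: "finite VT" "\<forall>e\<in>ET. \<exists>u v. e = {u, v} \<and> u \<noteq> v \<and> u \<in> VT \<and> v \<in> VT"
    and nc: "\<not> (\<exists>cs. length cs \<ge> 3 \<and> distinct cs \<and> set cs \<subseteq> VT \<and>
            (\<forall>i<length cs. {cs ! i, cs ! ((i + 1) mod length cs)} \<in> ET))"
    using assms unfolding forest_def simple_graph_def by auto
  have "simple_graph (VT - {l}) {e\<in>ET. l \<notin> e}"
    unfolding simple_graph_def
  proof (intro conjI ballI)
    show "finite (VT - {l})" using sg by simp
    fix e assume e: "e \<in> {e\<in>ET. l \<notin> e}"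
    then obtain u v where "e = {u, v}" "u \<noteq> v" "u \<in> VT" "v \<in> VT" using sg by blast
    then show "\<exists>u v. e = {u, v} \<and> u \<noteq> v \<and> u \<in> VT - {l} \<and> v \<in> VT - {l}" using e by blast
  qed
  moreover have "\<not> (\<exists>cs. length cs \<ge> 3 \<and> distinct cs \<and> set cs \<subseteq> VT - {l} \<and>
            (\<forall>i<length cs. {cs ! i, cs ! ((i + 1) mod length cs)} \<in> {e\<in>ET. l \<notin> e}))"
  proof
    assume "\<exists>cs. length cs \<ge> 3 \<and> distinct cs \<and> set cs \<subseteq> VT - {l} \<and>
            (\<forall>i<length cs. {cs ! i, cs ! ((i + 1) mod length cs)} \<in> {e\<in>ET. l \<notin> e})"
    then obtain cs where c: "length cs \<ge> 3" "distinct cs" "set cs \<subseteq> VT - {l}"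
      "\<forall>i<length cs. {cs ! i, cs ! ((i + 1) mod length cs)} \<in> {e\<in>ET. l \<notin> e}" by blast
    have c3: "set cs \<subseteq> VT" using c(3) by auto
    have c4: "\<forall>i<length cs. {cs ! i, cs ! ((i + 1) mod length cs)} \<in> ET" using c(4) by auto
    show False using nc c(1,2) c3 c4 by blast
  qed
  ultimately show ?thesis unfolding forest_def by blast
qed

lemma main_ind:
  assumes "forest VT ET"
    and "\<forall>e1\<in>ET. \<forall>e2\<in>ET. e1 \<noteq> e2 \<and> e1 \<inter> e2 \<noteq> {} \<longrightarrow> edge_map \<phi> e1 \<noteq> edge_map \<phi> e2"
  shows "\<exists>V \<subseteq> VT. bij_betw \<phi> V (\<phi> ` VT) \<and> inj_on (edge_map \<phi>) (edges_at ET V)"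
  using assms
proof (induction "card VT" arbitrary: VT ET rule: less_induct)
  case less
  note F = less.prems(1) and LI = less.prems(2)
  have fin: "finite VT" and sg: "\<forall>e\<in>ET. \<exists>u v. e = {u, v} \<and> u \<noteq> v \<and> u \<in> VT \<and> v \<in> VT"
    using F unfolding forest_def simple_graph_def by auto
  show ?case
  proof (cases "VT = {}")
    case True
    then have "ET = {}" using sg by auto
    then show ?thesis using True by (auto simp: edges_at_def bij_betw_def)
  next
    case False
    obtain l where lV: "l \<in> VT" and leaf: "\<And>y z. {l,y}\<in>ET \<Longrightarrow> {l,z}\<in>ET \<Longrightarrow> y=z"
      using forest_leaf[OF F False] by blast
    define VT' where "VT' = VT - {l}"
    define ET' where "ET' = {e\<in>ET. l \<notin> e}"
    have F': "forest VT' ET'" using forest_del[OF F] VT'_def ET'_def by simp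
    have LI': "\<forall>e1\<in>ET'. \<forall>e2\<in>ET'. e1 \<noteq> e2 \<and> e1 \<inter> e2 \<noteq> {} \<longrightarrow> edge_map \<phi> e1 \<noteq> edge_map \<phi> e2"
      using LI ET'_def by auto
    have "card VT' < card VT" using fin lV VT'_def by (metis card_Diff1_less)
    from less.hyps[OF this F' LI'] obtain V' where V'sub: "V' \<subseteq> VT'" and bij': "bij_betw \<phi> V' (\<phi> ` VT')"
        and inj': "inj_on (edge_map \<phi>) (edges_at ET' V')"
      by blast
    have injV': "inj_on \<phi> V'" and imV': "\<phi> ` V' = \<phi> ` VT'" using bij' by (auto simp: bij_betw_def)
    have lV': "l \<notin> V'" using V'sub VT'_def by auto
    have VTeq: "VT = insert l VT'" using lV VT'_def by auto
    have sg2: "\<exists>u v. e = {u, v} \<and> u \<in> VT \<and> v \<in> VT" if "e \<in> ET" for e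
      using bspec[OF sg that] by blast
    have eVT: "x \<in> VT" if ex1: "e \<in> ET" and ex2: "x \<in> e" for e x
    proof -
      obtain u v where "e = {u, v}" "u \<in> VT" "v \<in> VT" using sg2[OF ex1] by blast
      then show ?thesis using ex2 by auto
    qed
    show ?thesis
    proof (cases "\<phi> l \<in> \<phi> ` VT'")
      case False
      define V where "V = insert l V'"
      have "bij_betw \<phi> V (\<phi> ` VT)"
        using bij' False lV' VTeq V_def by (simp add: bij_betw_def imV')
      moreover have "inj_on (edge_map \<phi>) (edges_at ET V)"
      proof (rule inj_onI)
        fix e1 e2 assume e1: "e1 \<in> edges_at ET V" and e2: "e2 \<in> edges_at ET V"
          and eq: "edge_map \<phi> e1 = edge_map \<phi> e2"
        have o: "e \<in> edges_at ET' V'" if "e \<in> edges_at ET V" "l \<notin> e" for e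
          using that V_def ET'_def by (auto simp: edges_at_def)
        have c: False if "e \<in> ET" "l \<notin> e" "l \<in> e'" "edge_map \<phi> e' = edge_map \<phi> e" for e e'
        proof -
          have "\<phi> l \<in> \<phi> ` e" using that by (auto simp: edge_map_def)
          then obtain p where "p \<in> e" "\<phi> p = \<phi> l" by auto
          then have "p \<in> VT'" using that eVT VT'_def by auto
          then show False using False \<open>\<phi> p = \<phi> l\<close> by (metis image_eqI)
        qed
        show "e1 = e2"
        proof (cases "l \<in> e1")
          case True
          show ?thesis
          proof (cases "l \<in> e2")
            case True
            then show ?thesis using \<open>l \<in> e1\<close> LI e1 e2 eq by (auto simp: edges_at_def)
          next
            case False then show ?thesis using c[of e2 e1] True e2 eq by (auto simp: edges_at_def)
          qed
        next
          case False
          show ?thesis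
          proof (cases "l \<in> e2")
            case True
            then show ?thesis using c[of e1 e2] False e1 eq by (auto simp: edges_at_def)
          next
            case False then show ?thesis using inj' o e1 e2 eq \<open>l \<notin> e1\<close> by (auto dest: inj_onD)
          qed
        qed
      qed
      moreover have "V \<subseteq> VT" using V_def V'sub VT'_def lV by auto
      ultimately show ?thesis by blast
    next
      case True
      have imVT: "\<phi> ` VT = \<phi> ` VT'" using True VTeq by auto
      show ?thesis
      proof (cases "inj_on (edge_map \<phi>) (edges_at ET V')")
        case True
        then show ?thesis using bij' imVT V'sub VT'_def by auto
      next
        case False
        then obtain e1 e2 where e1: "e1 \<in> edges_at ET V'" and e2: "e2 \<in> edges_at ET V'"
          and ne: "e1 \<noteq> e2" and eq: "edge_map \<phi> e1 = edge_map \<phi> e2"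
          unfolding inj_on_def by blast
        have o: "e \<in> edges_at ET' V'" if "e \<in> edges_at ET V'" "l \<notin> e" for e
          using that ET'_def by (auto simp: edges_at_def)
        have key: "\<exists>e1 e2. e1 \<in> edges_at ET V' \<and> e2 \<in> edges_at ET' V' \<and> l \<in> e1 \<and> 
             edge_map \<phi> e1 = edge_map \<phi> e2"
        proof (cases "l \<in> e1")
          case True
          then have "l \<notin> e2" using LI e1 e2 ne eq by (auto simp: edges_at_def)
          then show ?thesis using True e1 e2 o eq by blast
        next
          case False
          then have "l \<in> e2" using inj' o e1 e2 ne eq by (auto dest: inj_onD)
          then show ?thesis using False e1 e2 o eq by metis
        qed
        then obtain f1 f2 where f1: "f1 \<in> edges_at ET V'" and f2: "f2 \<in> edges_at ET' V'"
          and lf1: "l \<in> f1" and feq: "edge_map \<phi> f1 = edge_map \<phi> f2" by blast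
        have "f1 \<in> ET" using f1 by (simp add: edges_at_def)
        then obtain u v where uv: "f1 = {u,v}" using sg2 by blast
        obtain w where f1w: "f1 = {l,w}" using uv lf1 by blast
        have wV': "w \<in> V'" using f1 f1w lV' by (auto simp: edges_at_def)
        have f1E: "f1 \<in> ET" using f1 by (auto simp: edges_at_def)
        have f2E: "f2 \<in> ET" "l \<notin> f2" using f2 ET'_def by (auto simp: edges_at_def)
        obtain t where t: "t \<in> f2" "t \<in> V'" using f2 by (auto simp: edges_at_def)
        have "\<phi> t \<in> {\<phi> l, \<phi> w}" using t feq f1w by (auto simp: edge_map_def)
        moreover have "\<phi> t \<noteq> \<phi> w"
        proof
          assume "\<phi> t = \<phi> w"
          then have "t = w" using injV' t wV' by (auto dest: inj_onD)
          then have "f1 \<inter> f2 \<noteq> {}" using t f1w by auto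
          moreover have "f1 \<noteq> f2" using lf1 f2E by auto
          ultimately show False using bspec[OF bspec[OF LI f1E] f2E(1)] feq by blast
        qed
        ultimately have tl: "\<phi> t = \<phi> l" by auto
        define V where "V = insert l (V' - {t})"
        have imV: "\<phi> ` V = \<phi> ` VT"
        proof -
          have "\<phi> ` V = insert (\<phi> l) (\<phi> ` (V' - {t}))" using V_def by simp
          also have "\<phi> ` (V' - {t}) = \<phi> ` V' - {\<phi> t}" using injV' t by (simp add: inj_on_image_set_diff)
          finally show ?thesis using tl t imV' imVT True by auto
        qed
        have injV: "inj_on \<phi> V"
        proof -
          have "inj_on \<phi> (V' - {t})" using injV' by (rule inj_on_subset) auto
          moreover have "\<phi> l \<notin> \<phi> ` (V' - {t})"
          proof
            assume "\<phi> l \<in> \<phi> ` (V' - {t})"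
            then obtain r where r1: "\<phi> l = \<phi> r" and r2: "r \<in> V' - {t}" by (rule imageE)
            then have "r \<in> V'" "r \<noteq> t" "\<phi> r = \<phi> t" using tl by auto
            then have "r = t" using inj_onD[OF injV' _ _ t(2), of r] by blast
            then show False using \<open>r \<noteq> t\<close> by blast
          qed
          moreover have "\<phi> l \<notin> \<phi> ` (V' - {t} - {l})" using calculation(2) by blast
          ultimately show ?thesis unfolding V_def using inj_on_insert[of \<phi> l "V' - {t}"] by blast
        qed
        have bijV: "bij_betw \<phi> V (\<phi> ` VT)" using imV injV by (simp add: bij_betw_def)
        have sub: "edges_at ET V \<subseteq> insert f1 (edges_at ET' (V' - {t}))"
        proof
          fix e assume e: "e \<in> edges_at ET V"
          show "e \<in> insert f1 (edges_at ET' (V' - {t}))"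
          proof (cases "l \<in> e")
            case True
            have "e \<in> ET" using e by (simp add: edges_at_def)
            then obtain u v where uv: "e = {u,v}" using sg2 by blast
            then have "e = {l,v} \<or> e = {l,u}" using True by auto
            then obtain x where ex: "e = {l,x}" by blast
            have "{l,x} \<in> ET" using ex \<open>e \<in> ET\<close> by simp
            moreover have "{l,w} \<in> ET" using f1E f1w by simp
            ultimately have "x = w" by (rule leaf)
            then show ?thesis using ex f1w by simp
          next
            case False
            have "e \<in> ET" "e \<inter> insert l (V' - {t}) \<noteq> {}" using e V_def by (auto simp: edges_at_def)
            then have "e \<in> ET'" "e \<inter> (V' - {t}) \<noteq> {}" using False ET'_def by auto
            then show ?thesis by (simp add: edges_at_def)
          qed
        qed
        have sub2: "edges_at ET' (V' - {t}) \<subseteq> edges_at ET' V'" by (auto simp: edges_at_def)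
        have injV: "inj_on (edge_map \<phi>) (edges_at ET V)"
        proof (rule inj_on_subset[OF _ sub], rule inj_on_insert[THEN iffD2], rule conjI)
          show "inj_on (edge_map \<phi>) (edges_at ET' (V' - {t}))" by (rule inj_on_subset[OF inj' sub2])
          show "edge_map \<phi> f1 \<notin> edge_map \<phi> ` (edges_at ET' (V' - {t}) - {f1})"
          proof
            assume "edge_map \<phi> f1 \<in> edge_map \<phi> ` (edges_at ET' (V' - {t}) - {f1})"
            then obtain e where e: "e \<in> edges_at ET' (V' - {t})" "e \<noteq> f1" "edge_map \<phi> e = edge_map \<phi> f1"
              by auto
            obtain s where s: "s \<in> e" "s \<in> V'" "s \<noteq> t" using e by (auto simp: edges_at_def)
            have eE: "e \<in> ET" "l \<notin> e" using e ET'_def by (auto simp: edges_at_def)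
            have "\<phi> s \<in> {\<phi> l, \<phi> w}" using s e f1w by (auto simp: edge_map_def)
            moreover have "\<phi> s \<noteq> \<phi> l" using s t tl injV' by (metis inj_onD)
            moreover have "\<phi> s \<noteq> \<phi> w"
            proof
              assume "\<phi> s = \<phi> w"
              then have "s = w" using injV' s wV' by (auto dest: inj_onD)
              then have "f1 \<inter> e \<noteq> {}" using s f1w by auto
              moreover have "f1 \<noteq> e" using e(2) by auto
              ultimately show False using bspec[OF bspec[OF LI f1E] eE(1)] e(3) by auto
            qed
            ultimately show False by auto
          qed
        qed
        have "V \<subseteq> VT" using V_def V'sub VT'_def lV by auto
        then show ?thesis using bijV injV by blast
      qed
    qed
  qed
qed

theorem lemma5p1:
  fixes \<phi> :: "'a \<Rightarrow> 'b"
    and VT :: "'a set" and ET :: "'a set set"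
    and VF :: "'b set" and EF :: "'b set set"
  assumes "forest VT ET"
    and "simple_graph VF EF"
    and "local_iso \<phi> VT ET VF EF"
  shows "\<exists>V \<subseteq> VT. bij_betw \<phi> V VF \<and> inj_on (edge_map \<phi>) (edges_at ET V)"
proof -
  have im: "\<phi> ` VT = VF"
    and LI: "\<forall>e1\<in>ET. \<forall>e2\<in>ET. e1 \<noteq> e2 \<and> e1 \<inter> e2 \<noteq> {} \<longrightarrow> edge_map \<phi> e1 \<noteq> edge_map \<phi> e2"
    using assms(3) unfolding local_iso_def by auto
  show ?thesis using main_ind[OF assms(1) LI] im by simp
qed

end
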